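(* Let $q$ be a prime, $0\le r\le n$, $X_r=\mathrm{diag}(qI_r,I_{n-r})$ and $X_{0,r}=\mathrm{diag}(I_{n-r},q^{-1}I_r)$. Suppose $(M\ N)$ and $(X_{0,r}MX_r^{-1}\ \ X_{0,r}NX_r)$ are both integral coprime symmetric pairs, with $\det N\ne0$. Then $$\mathcal G_{X_{0,r}MX_r^{-1}}(X_{0,r}NX_r)=\mathcal G_M(N).$$
   Context: A pair $(M\ N)$ of integral $n\times n$ matrices is a coprime symmetric pair if $M\,{}^tN$ is symmetric and $(M\ N)$ has rank $n$ modulo every prime. For such a pair with $\det N\ne0$, $\mathcal G_M(N)=\sum_{U\in\mathbb Z^{1,n}/\mathbb Z^{1,n}N}\exp\big(2\pi i\,\mathrm{Tr}({}^tUUN^{-1}M)\big)$. *)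

theory Defs
  imports "HOL-Analysis.Analysis" "HOL-Computational_Algebra.Primes"
    "Jordan_Normal_Form.Determinant"
begin

text \<open>Integral n x n matrices are JNF matrices of type int mat in carrier_mat n n;
  row vectors in Z^{1,n} are elements of carrier_vec n (acting on the left).\<close>

definition ratm :: "int mat \<Rightarrow> rat mat" where
  "ratm A = map_mat rat_of_int A"

definition mtrace :: "'a::comm_ring_1 mat \<Rightarrow> 'a" where
  "mtrace A = (\<Sum>i<dim_row A. A $$ (i,i))"

definition mat_inv :: "'a::field mat \<Rightarrow> 'a mat" where
  "mat_inv A = (THE B. B \<in> carrier_mat (dim_row A) (dim_row A) \<and> inverts_mat A B \<and> inverts_mat B A)"

text \<open>(M N) has rank n modulo p: its n rows are linearly independent over F_p, i.e.
  a row vector x with x(M N) = 0 mod p is itself 0 mod p.\<close>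
definition rank_full_mod :: "nat \<Rightarrow> int \<Rightarrow> int mat \<Rightarrow> int mat \<Rightarrow> bool" where
  "rank_full_mod n p M N \<longleftrightarrow>
     (\<forall>x \<in> carrier_vec n.
        (\<forall>j<n. p dvd (x \<bullet> col M j) \<and> p dvd (x \<bullet> col N j)) \<longrightarrow> (\<forall>i<n. p dvd x $ i))"

definition coprime_sym_pair :: "nat \<Rightarrow> int mat \<Rightarrow> int mat \<Rightarrow> bool" where
  "coprime_sym_pair n M N \<longleftrightarrow>
     M \<in> carrier_mat n n \<and> N \<in> carrier_mat n n \<and>
     transpose_mat (M * transpose_mat N) = M * transpose_mat N \<and>
     (\<forall>p::int. prime p \<longrightarrow> rank_full_mod n p M N)"

text \<open>U ~ V iff U - V \<in> Z^{1,n} N (row vectors), i.e. U - V = W N = N^t W.\<close>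
definition lat_rel :: "int mat \<Rightarrow> (int vec \<times> int vec) set" where
  "lat_rel N = {(u,v). u \<in> carrier_vec (dim_row N) \<and> v \<in> carrier_vec (dim_row N) \<and>
      (\<exists>w \<in> carrier_vec (dim_row N). u - v = transpose_mat N *\<^sub>v w)}"

definition gauss_term :: "int mat \<Rightarrow> int mat \<Rightarrow> int vec \<Rightarrow> complex" where
  "gauss_term M N U =
     exp (2 * pi * \<i> * complex_of_real (real_of_rat
        (mtrace (transpose_mat (mat_of_row (map_vec rat_of_int U)) * mat_of_row (map_vec rat_of_int U)
                 * mat_inv (ratm N) * ratm M))))"

definition gauss_sum :: "int mat \<Rightarrow> int mat \<Rightarrow> complex" where
  "gauss_sum M N = (\<Sum>C \<in> carrier_vec (dim_row N) // lat_rel N. gauss_term M N (SOME U. U \<in> C))"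

definition X_r :: "nat \<Rightarrow> nat \<Rightarrow> nat \<Rightarrow> rat mat" where
  "X_r n q r = mat_diag n (\<lambda>i. if i < r then of_nat q else 1)"

definition X_0r :: "nat \<Rightarrow> nat \<Rightarrow> nat \<Rightarrow> rat mat" where
  "X_0r n q r = mat_diag n (\<lambda>i. if i < n - r then 1 else 1 / of_nat q)"

end

theory Submission
  imports Defs
begin


lemma mat_inv_unique:
  fixes A B :: "'a::field mat"
  assumes A: "A \<in> carrier_mat n n" and B: "B \<in> carrier_mat n n"
    and AB: "A * B = 1\<^sub>m n" and BA: "B * A = 1\<^sub>m n"
  shows "mat_inv A = B"
proof -
  have dA: "dim_row A = n" using A by auto
  show ?thesis unfolding mat_inv_def dA
  proof (rule the_equality)
    show "B \<in> carrier_mat n n \<and> inverts_mat A B \<and> inverts_mat B A"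
      using assms dA unfolding inverts_mat_def by auto
  next
    fix C assume C: "C \<in> carrier_mat n n \<and> inverts_mat A C \<and> inverts_mat C A"
    hence C1: "C \<in> carrier_mat n n" and CA: "C * A = 1\<^sub>m n" unfolding inverts_mat_def by auto
    have "C = C * (A * B)" using C1 AB by simp
    also have "\<dots> = (C * A) * B" using C1 A B by (simp add: assoc_mult_mat)
    also have "\<dots> = B" using CA B by simp
    finally show "C = B" .
  qed
qed

lemma ratm_carrier[simp]: "N \<in> carrier_mat n m \<Longrightarrow> ratm N \<in> carrier_mat n m"
  unfolding ratm_def by auto

lemma ratm_index[simp]: "i < dim_row N \<Longrightarrow> j < dim_col N \<Longrightarrow> ratm N $$ (i,j) = rat_of_int (N $$ (i,j))"
  unfolding ratm_def by auto

lemma ratm_inv_exists: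
  assumes N: "N \<in> carrier_mat n n" and d: "det N \<noteq> 0"
  shows "\<exists>B \<in> carrier_mat n n. ratm N * B = 1\<^sub>m n \<and> B * ratm N = 1\<^sub>m n"
proof -
  have "det (ratm N) = of_int (det N)" unfolding ratm_def by (rule of_int_hom.hom_det)
  with d have d': "det (ratm N) \<noteq> 0" by simp
  from det_non_zero_imp_unit[OF ratm_carrier[OF N] d', of "()"]
  show ?thesis unfolding Units_def ring_mat_def by auto
qed

lemma mat_of_row_sq:
  fixes U :: "'a::comm_ring_1 vec"
  assumes U: "U \<in> carrier_vec n"
  shows "transpose_mat (mat_of_row U) * mat_of_row U = Matrix.mat n n (\<lambda>(i,j). U $ i * U $ j)"
  using U by (intro eq_matI) (auto simp: mat_of_row_def scalar_prod_def)

lemma trace_qf: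
  fixes U :: "'a::comm_ring_1 vec"
  assumes U: "U \<in> carrier_vec n" and A: "A \<in> carrier_mat n n"
  shows "mtrace (transpose_mat (mat_of_row U) * mat_of_row U * A) = scalar_prod U (A *\<^sub>v U)"
proof -
  have "mtrace (transpose_mat (mat_of_row U) * mat_of_row U * A)
      = (\<Sum>i<n. \<Sum>k<n. U $ i * U $ k * A $$ (k,i))"
    unfolding mtrace_def mat_of_row_sq[OF U] using A
    by (auto simp: scalar_prod_def lessThan_atLeast0 intro!: sum.cong)
  also have "\<dots> = (\<Sum>k<n. \<Sum>i<n. U $ k * (A $$ (k,i) * U $ i))"
    by (subst sum.swap) (auto simp: mult_ac intro!: sum.cong)
  also have "\<dots> = scalar_prod U (A *\<^sub>v U)"
    using U A by (auto simp: scalar_prod_def mult_mat_vec_def sum_distrib_left lessThan_atLeast0 intro!: sum.cong)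
  finally show ?thesis .
qed



lemma lat_rel_iff:
  fixes N :: "int mat"
  assumes N: "N \<in> carrier_mat n n"
  shows "(u,v) \<in> lat_rel N \<longleftrightarrow> u \<in> carrier_vec n \<and> v \<in> carrier_vec n \<and>
     (\<exists>w \<in> carrier_vec n. \<forall>j<n. u $ j - v $ j = (\<Sum>i<n. N $$ (i,j) * w $ i))"
proof -
  have key: "u - v = transpose_mat N *\<^sub>v w \<longleftrightarrow> (\<forall>j<n. u $ j - v $ j = (\<Sum>i<n. N $$ (i,j) * w $ i))"
    if "u \<in> carrier_vec n" "v \<in> carrier_vec n" "w \<in> carrier_vec n" for u v w :: "int vec"
    using that N by (auto simp: vec_eq_iff mult_mat_vec_def scalar_prod_def lessThan_atLeast0)
  show ?thesis unfolding lat_rel_def using N key by auto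
qed

lemma lat_rel_equiv:
  fixes N :: "int mat"
  assumes N: "N \<in> carrier_mat n n"
  shows "equiv (carrier_vec n) (lat_rel N)"
proof (rule equivI)
  show "lat_rel N \<subseteq> carrier_vec n \<times> carrier_vec n" using lat_rel_iff[OF N] by auto
  show "refl_on (carrier_vec n) (lat_rel N)"
  proof (rule refl_onI)
    fix u :: "int vec" assume u: "u \<in> carrier_vec n"
    show "(u,u) \<in> lat_rel N" unfolding lat_rel_iff[OF N] using u
      by (intro conjI bexI[of _ "0\<^sub>v n"]) auto
  qed
  show "sym (lat_rel N)"
  proof (rule symI)
    fix u v assume "(u,v) \<in> lat_rel N"
    then obtain w where uv: "u \<in> carrier_vec n" "v \<in> carrier_vec n" "w \<in> carrier_vec n"
      and e: "\<forall>j<n. u $ j - v $ j = (\<Sum>i<n. N $$ (i,j) * w $ i)"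
      unfolding lat_rel_iff[OF N] by blast
    show "(v,u) \<in> lat_rel N" unfolding lat_rel_iff[OF N] using uv
    proof (intro conjI bexI[of _ "Matrix.vec n (\<lambda>i. - w $ i)"])
      show "\<forall>j<n. v $ j - u $ j = (\<Sum>i<n. N $$ (i, j) * Matrix.vec n (\<lambda>i. - w $ i) $ i)"
      proof (intro allI impI)
        fix j assume j: "j < n"
        have "v $ j - u $ j = - (\<Sum>i<n. N $$ (i,j) * w $ i)" using e j by (metis minus_diff_eq)
        also have "\<dots> = (\<Sum>i<n. N $$ (i, j) * Matrix.vec n (\<lambda>i. - w $ i) $ i)"
          by (simp add: sum_negf[symmetric])
        finally show "v $ j - u $ j = (\<Sum>i<n. N $$ (i, j) * Matrix.vec n (\<lambda>i. - w $ i) $ i)" .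
      qed
    qed auto
  qed
  show "trans (lat_rel N)"
  proof (rule transI)
    fix u v t assume "(u,v) \<in> lat_rel N" "(v,t) \<in> lat_rel N"
    then obtain w1 w2 where uv: "u \<in> carrier_vec n" "v \<in> carrier_vec n" "t \<in> carrier_vec n"
       "w1 \<in> carrier_vec n" "w2 \<in> carrier_vec n"
      and e1: "\<forall>j<n. u $ j - v $ j = (\<Sum>i<n. N $$ (i,j) * w1 $ i)"
      and e2: "\<forall>j<n. v $ j - t $ j = (\<Sum>i<n. N $$ (i,j) * w2 $ i)"
      unfolding lat_rel_iff[OF N] by blast
    show "(u,t) \<in> lat_rel N" unfolding lat_rel_iff[OF N] using uv
    proof (intro conjI bexI[of _ "Matrix.vec n (\<lambda>i. w1 $ i + w2 $ i)"])
      show "\<forall>j<n. u $ j - t $ j = (\<Sum>i<n. N $$ (i, j) * Matrix.vec n (\<lambda>i. w1 $ i + w2 $ i) $ i)"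
      proof (intro allI impI)
        fix j assume j: "j < n"
        have "u $ j - t $ j = (\<Sum>i<n. N $$ (i,j) * w1 $ i) + (\<Sum>i<n. N $$ (i,j) * w2 $ i)"
          using e1[rule_format, OF j] e2[rule_format, OF j] by linarith
        also have "\<dots> = (\<Sum>i<n. N $$ (i, j) * Matrix.vec n (\<lambda>i. w1 $ i + w2 $ i) $ i)"
          by (simp add: sum.distrib[symmetric] distrib_left)
        finally show "u $ j - t $ j = (\<Sum>i<n. N $$ (i, j) * Matrix.vec n (\<lambda>i. w1 $ i + w2 $ i) $ i)" .
      qed
    qed auto
  qed
qed

lemma mat_diag_mult_vec:
  assumes v: "v \<in> carrier_vec n"
  shows "mat_diag n f *\<^sub>v v = Matrix.vec n (\<lambda>i. f i * v $ i)"
proof (rule eq_vecI)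
  fix i assume i: "i < dim_vec (Matrix.vec n (\<lambda>i. f i * v $ i))"
  hence i: "i < n" by simp
  have "(mat_diag n f *\<^sub>v v) $ i = (\<Sum>j\<in>{0..<n}. (if i = j then f j else 0) * v $ j)"
    using i v unfolding mat_diag_def mult_mat_vec_def scalar_prod_def
    by auto
  also have "\<dots> = (\<Sum>j\<in>{0..<n}. (if i = j then f j * v $ j else 0))"
    by (rule sum.cong) auto
  also have "\<dots> = f i * v $ i" using i by (simp add: sum.delta')
  finally show "(mat_diag n f *\<^sub>v v) $ i = Matrix.vec n (\<lambda>i. f i * v $ i) $ i" using i by simp
qed (simp add: mat_diag_def)

lemma exp_shift_int:
  fixes a :: rat and k :: int
  shows "exp (2 * pi * \<i> * complex_of_real (real_of_rat (a + of_int k)))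
       = exp (2 * pi * \<i> * complex_of_real (real_of_rat a))"
proof -
  have e: "exp (complex_of_real (2 * real_of_int k * pi) * \<i>) = 1"
    by (rule exp_integer_2pi) simp
  have "2 * pi * \<i> * complex_of_real (real_of_rat (a + of_int k))
     = 2 * pi * \<i> * complex_of_real (real_of_rat a) + complex_of_real (2 * real_of_int k * pi) * \<i>"
    by (simp add: of_rat_add algebra_simps)
  hence "exp (2 * pi * \<i> * complex_of_real (real_of_rat (a + of_int k)))
     = exp (2 * pi * \<i> * complex_of_real (real_of_rat a)) * exp (complex_of_real (2 * real_of_int k * pi) * \<i>)"
    by (simp add: exp_add)
  thus ?thesis using e by simp
qed



abbreviation rv :: "int vec \<Rightarrow> rat vec" where "rv \<equiv> map_vec rat_of_int"

lemma rv_scalar: "x \<in> carrier_vec n \<Longrightarrow> y \<in> carrier_vec n \<Longrightarrow>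
   scalar_prod (rv x) (rv y) = rat_of_int (scalar_prod x y)"
  by (simp add: scalar_prod_def of_int_sum)

lemma rv_mult: "A \<in> carrier_mat nr n \<Longrightarrow> x \<in> carrier_vec n \<Longrightarrow> rv (A *\<^sub>v x) = ratm A *\<^sub>v rv x"
  unfolding ratm_def by (rule of_int_hom.mult_mat_vec_hom)

lemma ratm_mult: "A \<in> carrier_mat nr n \<Longrightarrow> B \<in> carrier_mat n nc \<Longrightarrow> ratm (A * B) = ratm A * ratm B"
  unfolding ratm_def by (rule of_int_hom.mat_hom_mult)

lemma ratm_transpose: "ratm (transpose_mat A) = transpose_mat (ratm A)"
  unfolding ratm_def by (intro eq_matI) auto

lemma gauss_term_qf:
  assumes M: "M \<in> carrier_mat n n" and N: "N \<in> carrier_mat n n"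
    and NI: "mat_inv (ratm N) \<in> carrier_mat n n" and U: "U \<in> carrier_vec n"
  shows "gauss_term M N U = exp (2 * pi * \<i> * complex_of_real (real_of_rat
     (scalar_prod (rv U) ((mat_inv (ratm N) * ratm M) *\<^sub>v rv U))))"
proof -
  let ?R = "rv U"
  have R: "?R \<in> carrier_vec n" using U by simp
  have X: "transpose_mat (mat_of_row ?R) * mat_of_row ?R \<in> carrier_mat n n" using R by auto
  have "transpose_mat (mat_of_row ?R) * mat_of_row ?R * mat_inv (ratm N) * ratm M
     = transpose_mat (mat_of_row ?R) * mat_of_row ?R * (mat_inv (ratm N) * ratm M)"
    by (rule assoc_mult_mat[OF X NI ratm_carrier[OF M]])
  also have "mtrace \<dots> = scalar_prod ?R ((mat_inv (ratm N) * ratm M) *\<^sub>v ?R)"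
    using NI M R by (intro trace_qf) auto
  finally show ?thesis unfolding gauss_term_def by simp
qed

lemma qf_shift:
  fixes M N :: "int mat" and Ninv :: "rat mat"
  assumes M: "M \<in> carrier_mat n n" and N: "N \<in> carrier_mat n n" and NI: "Ninv \<in> carrier_mat n n"
    and inv1: "ratm N * Ninv = 1\<^sub>m n" and inv2: "Ninv * ratm N = 1\<^sub>m n"
    and sym: "transpose_mat (M * transpose_mat N) = M * transpose_mat N"
    and uv: "(u, v) \<in> lat_rel N"
  shows "\<exists>k::int. scalar_prod (rv u) ((Ninv * ratm M) *\<^sub>v rv u)
      = scalar_prod (rv v) ((Ninv * ratm M) *\<^sub>v rv v) + of_int k"
proof -
  from uv obtain w where u: "u \<in> carrier_vec n" and v: "v \<in> carrier_vec n" and w: "w \<in> carrier_vec n"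
    and e: "\<forall>j<n. u $ j - v $ j = (\<Sum>i<n. N $$ (i,j) * w $ i)"
    unfolding lat_rel_iff[OF N] by blast
  define Nr where "Nr = ratm N"
  define Mr where "Mr = ratm M"
  define S where "S = Ninv * Mr"
  define a where "a = rv v"
  define W where "W = rv w"
  define b where "b = transpose_mat Nr *\<^sub>v W"
  have Nr: "Nr \<in> carrier_mat n n" and Mr: "Mr \<in> carrier_mat n n" and S: "S \<in> carrier_mat n n"
    using M N NI by (auto simp: Nr_def Mr_def S_def)
  have a: "a \<in> carrier_vec n" and W: "W \<in> carrier_vec n" and b: "b \<in> carrier_vec n"
    using v w Nr by (auto simp: a_def W_def b_def)
  have ru: "rv u = a + b"
  proof (rule eq_vecI)
    fix j assume "j < dim_vec (a + b)"
    hence j: "j < n" using a b by simp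
    have "u $ j = v $ j + (\<Sum>i<n. N $$ (i,j) * w $ i)" using e j by (metis add_diff_cancel_left' diff_add_cancel)
    hence "rv u $ j = rat_of_int (v $ j) + rat_of_int (\<Sum>i<n. N $$ (i,j) * w $ i)"
      using j u by simp
    also have "\<dots> = (a + b) $ j" using j a b v w N
      by (auto simp add: a_def b_def W_def Nr_def mult_mat_vec_def scalar_prod_def of_int_sum lessThan_atLeast0 ratm_def intro!: sum.cong)
    finally show "rv u $ j = (a + b) $ j" .
  qed (use u a b in simp)
  have NM: "N * transpose_mat M = M * transpose_mat N"
    using sym M N by (simp add: transpose_mult)
  have SNt: "S * transpose_mat Nr = transpose_mat Mr"
  proof -
    have "Mr * transpose_mat Nr = Nr * transpose_mat Mr"
      using NM M N by (simp add: Mr_def Nr_def ratm_mult[symmetric] ratm_transpose[symmetric])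
    hence "S * transpose_mat Nr = Ninv * (Nr * transpose_mat Mr)"
      using NI Mr Nr by (simp add: S_def assoc_mult_mat)
    also have "\<dots> = (Ninv * Nr) * transpose_mat Mr" using NI Mr Nr by (simp add: assoc_mult_mat)
    finally show ?thesis using inv2 Mr by (simp add: Nr_def)
  qed
  have NS: "Nr * S = Mr"
  proof -
    have "Nr * S = (Nr * Ninv) * Mr" using NI Mr Nr by (simp add: S_def assoc_mult_mat)
    thus ?thesis using inv1 Mr by (simp add: Nr_def)
  qed
  have Sb: "S *\<^sub>v b = transpose_mat Mr *\<^sub>v W"
    using S Nr W by (simp add: b_def SNt[symmetric])
  have t1: "scalar_prod a (S *\<^sub>v b) = of_int (scalar_prod v (transpose_mat M *\<^sub>v w))"
    using v w M by (simp add: Sb a_def W_def Mr_def rv_mult[symmetric] ratm_transpose[symmetric] rv_scalar[of _ n])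
  have t2: "scalar_prod b (S *\<^sub>v a) = of_int (scalar_prod w (M *\<^sub>v v))"
  proof -
    have "scalar_prod b (S *\<^sub>v a) = scalar_prod W (Nr *\<^sub>v (S *\<^sub>v a))"
      unfolding b_def by (rule transpose_vec_mult_scalar[OF Nr _ W]) (use S a in simp)
    also have "\<dots> = scalar_prod W (Mr *\<^sub>v a)"
      using Nr S a by (simp add: NS[symmetric])
    finally show ?thesis using v w M by (simp add: a_def W_def Mr_def rv_mult[symmetric] rv_scalar[of _ n])
  qed
  have t3: "scalar_prod b (S *\<^sub>v b) = of_int (scalar_prod w ((N * transpose_mat M) *\<^sub>v w))"
  proof -
    have "scalar_prod b (S *\<^sub>v b) = scalar_prod b (transpose_mat Mr *\<^sub>v W)" by (simp add: Sb)
    also have "\<dots> = scalar_prod W (Nr *\<^sub>v (transpose_mat Mr *\<^sub>v W))"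
      unfolding b_def by (rule transpose_vec_mult_scalar[OF Nr _ W]) (use Mr W in simp)
    also have "\<dots> = scalar_prod W (ratm (N * transpose_mat M) *\<^sub>v W)"
    proof -
      have "ratm N * transpose_mat (ratm M) *\<^sub>v W = ratm N *\<^sub>v (transpose_mat (ratm M) *\<^sub>v W)"
        by (rule assoc_mult_mat_vec[of _ n n _ n]) (use M N W in auto)
      thus ?thesis using M N by (simp add: Nr_def Mr_def ratm_mult ratm_transpose)
    qed
    also have "ratm (N * transpose_mat M) *\<^sub>v W = rv ((N * transpose_mat M) *\<^sub>v w)"
      unfolding W_def by (rule rv_mult[symmetric, of _ n]) (use M N w in auto)
    also have "scalar_prod W (rv ((N * transpose_mat M) *\<^sub>v w)) = of_int (scalar_prod w ((N * transpose_mat M) *\<^sub>v w))"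
      unfolding W_def by (rule rv_scalar[of _ n]) (use M N w in auto)
    finally show ?thesis .
  qed
  have "scalar_prod (rv u) (S *\<^sub>v rv u) = scalar_prod a (S *\<^sub>v a) +
      (scalar_prod a (S *\<^sub>v b) + scalar_prod b (S *\<^sub>v a) + scalar_prod b (S *\<^sub>v b))"
    unfolding ru using a b S
    by (simp add: mult_add_distrib_mat_vec[OF S a b] scalar_prod_add_distrib[of _ n] add_scalar_prod_distrib[of _ n])
  also have "\<dots> = scalar_prod a (S *\<^sub>v a) + of_int (scalar_prod v (transpose_mat M *\<^sub>v w)
      + scalar_prod w (M *\<^sub>v v) + scalar_prod w ((N * transpose_mat M) *\<^sub>v w))"
    unfolding t1 t2 t3 by simp
  finally show ?thesis unfolding S_def Mr_def a_def by blast
qed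



lemma sum_quotient_bij:
  assumes eA: "equiv A R" and eB: "equiv B S"
    and g: "\<And>a. a \<in> A \<Longrightarrow> g a \<in> B"
    and gi: "\<And>a a'. a \<in> A \<Longrightarrow> a' \<in> A \<Longrightarrow> (a,a') \<in> R \<longleftrightarrow> (g a, g a') \<in> S"
    and gs: "\<And>b. b \<in> B \<Longrightarrow> \<exists>a\<in>A. (g a, b) \<in> S"
    and fR: "\<And>a a'. (a,a') \<in> R \<Longrightarrow> f a = f a'"
    and hS: "\<And>b b'. (b,b') \<in> S \<Longrightarrow> h b = h b'"
    and hg: "\<And>a. a \<in> A \<Longrightarrow> h (g a) = f a"
  shows "(\<Sum>D\<in>B//S. h (SOME y. y \<in> D)) = (\<Sum>C\<in>A//R. f (SOME x. x \<in> C))"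
proof -
  have some_in: "(SOME x. x \<in> C) \<in> C" if "C \<in> A//R" for C
  proof -
    from that obtain a where "C = R `` {a}" "a \<in> A" by (rule quotientE)
    hence "a \<in> C" using eA by (auto simp: equiv_def refl_on_def)
    thus ?thesis by (rule someI)
  qed
  have some_in': "(SOME x. x \<in> D) \<in> D" if "D \<in> B//S" for D
  proof -
    from that obtain b where "D = S `` {b}" "b \<in> B" by (rule quotientE)
    hence "b \<in> D" using eB by (auto simp: equiv_def refl_on_def)
    thus ?thesis by (rule someI)
  qed
  have inA: "(SOME x. x \<in> C) \<in> A" if "C \<in> A//R" for C
    using some_in[OF that] that eA by (meson in_quotient_imp_subset subsetD)
  define \<Phi> where "\<Phi> C = S `` {g (SOME x. x \<in> C)}" for C
  have bij: "bij_betw \<Phi> (A//R) (B//S)"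
  proof (rule bij_betwI')
    fix C1 C2 assume C1: "C1 \<in> A//R" and C2: "C2 \<in> A//R"
    let ?c1 = "SOME x. x \<in> C1" and ?c2 = "SOME x. x \<in> C2"
    have c1: "?c1 \<in> A" "?c1 \<in> C1" and c2: "?c2 \<in> A" "?c2 \<in> C2"
      using inA some_in C1 C2 by auto
    have "\<Phi> C1 = \<Phi> C2 \<longleftrightarrow> (g ?c1, g ?c2) \<in> S"
      unfolding \<Phi>_def using eq_equiv_class_iff[OF eB] g c1 c2 by auto
    also have "\<dots> \<longleftrightarrow> (?c1, ?c2) \<in> R" using gi c1 c2 by auto
    also have "\<dots> \<longleftrightarrow> C1 = C2"
    proof
      assume "(?c1, ?c2) \<in> R"
      thus "C1 = C2" using quotient_eqI[OF eA C1 C2 c1(2) c2(2)] by blast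
    next
      assume "C1 = C2"
      thus "(?c1, ?c2) \<in> R" using C2 c2 eA
        by (metis equiv_class_eq_iff quotientE Image_singleton_iff c1(2))
    qed
    finally show "\<Phi> C1 = \<Phi> C2 \<longleftrightarrow> C1 = C2" .
  next
    fix C assume C: "C \<in> A//R"
    show "\<Phi> C \<in> B//S" unfolding \<Phi>_def using g[OF inA[OF C]] by (rule quotientI)
  next
    fix D assume D: "D \<in> B//S"
    then obtain b where Db: "D = S `` {b}" "b \<in> B" by (rule quotientE)
    from gs[OF Db(2)] obtain a where a: "a \<in> A" "(g a, b) \<in> S" by blast
    let ?C = "R `` {a}"
    have C: "?C \<in> A//R" using a(1) by (rule quotientI)
    let ?c = "SOME x. x \<in> ?C"
    have c: "?c \<in> A" "?c \<in> ?C" by (rule inA[OF C], rule some_in[OF C])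
    hence "(a, ?c) \<in> R" by simp
    hence "(g a, g ?c) \<in> S" using gi a c by auto
    hence "(g ?c, b) \<in> S" using a eB by (meson equivE symE transE)
    hence "\<Phi> ?C = D" unfolding \<Phi>_def Db by (rule equiv_class_eq[OF eB])
    thus "\<exists>C\<in>A//R. D = \<Phi> C" using C by blast
  qed
  have val: "h (SOME y. y \<in> \<Phi> C) = f (SOME x. x \<in> C)" if C: "C \<in> A//R" for C
  proof -
    let ?c = "SOME x. x \<in> C"
    have "\<Phi> C \<in> B//S" using bij C by (meson bij_betwE)
    hence "(SOME y. y \<in> \<Phi> C) \<in> \<Phi> C" by (rule some_in')
    hence "(g ?c, SOME y. y \<in> \<Phi> C) \<in> S" unfolding \<Phi>_def by simp
    hence "h (SOME y. y \<in> \<Phi> C) = h (g ?c)" using hS by metis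
    also have "\<dots> = f ?c" using hg inA[OF C] by blast
    finally show ?thesis .
  qed
  have "(\<Sum>D\<in>B//S. h (SOME y. y \<in> D)) = (\<Sum>C\<in>A//R. h (SOME y. y \<in> \<Phi> C))"
    by (rule sum.reindex_bij_betw[OF bij, symmetric])
  also have "\<dots> = (\<Sum>C\<in>A//R. f (SOME x. x \<in> C))" using val by (rule sum.cong[OF refl])
  finally show ?thesis .
qed



lemma dvd_small_zero:
  fixes x q :: int
  assumes "q dvd x" "0 < q" "-q < x" "x < q"
  shows "x = 0"
proof -
  from assms(1) obtain m where m: "x = q * m" by (auto elim: dvdE)
  show ?thesis
  proof (cases "m = 0")
    case False
    hence "m \<ge> 1 \<or> m \<le> -1" by linarith
    hence "q * m \<ge> q \<or> q * m \<le> -q" using assms(2)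
      by (metis mult.right_neutral mult_le_cancel_left_pos mult_minus1_right)
    thus ?thesis using assms m by linarith
  qed (simp add: m)
qed

lemma sp_col: fixes y :: "'a::comm_semiring_0 vec" shows "y \<in> carrier_vec n \<Longrightarrow> N \<in> carrier_mat n n \<Longrightarrow> j < n \<Longrightarrow>
   scalar_prod y (col N j) = (\<Sum>i<n. N $$ (i,j) * y $ i)"
  by (auto simp: scalar_prod_def lessThan_atLeast0 mult.commute intro!: sum.cong)

lemma sum_shift_tail:
  fixes G :: "nat \<Rightarrow> 'a::comm_monoid_add"
  assumes r: "r \<le> n"
  shows "(\<Sum>i<n. if n - r \<le> i then G (i - (n - r)) else 0) = (\<Sum>k<r. G k)"
proof -
  let ?F = "\<lambda>i. if n - r \<le> i then G (i - (n - r)) else 0"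
  have "(\<Sum>i<n. ?F i) = (\<Sum>i\<in>{n-r..<n}. ?F i)"
    by (rule sum.mono_neutral_right) auto
  also have "\<dots> = (\<Sum>i\<in>{0+(n-r)..<r+(n-r)}. ?F i)" using r by simp
  also have "\<dots> = (\<Sum>k\<in>{0..<r}. ?F (k + (n-r)))" by (rule sum.shift_bounds_nat_ivl)
  also have "\<dots> = (\<Sum>k<r. G k)" by (simp add: lessThan_atLeast0)
  finally show ?thesis .
qed

locale modsetup =
  fixes n r :: nat and q :: int and M N :: "int mat"
  assumes N: "N \<in> carrier_mat n n" and M: "M \<in> carrier_mat n n"
    and rk: "rank_full_mod n q M N" and r: "r \<le> n" and q: "0 < q"
    and Ndiv: "\<And>i j. n-r \<le> i \<Longrightarrow> i<n \<Longrightarrow> r \<le> j \<Longrightarrow> j<n \<Longrightarrow> q dvd N$$(i,j)"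
    and Mdiv: "\<And>i j. n-r \<le> i \<Longrightarrow> i<n \<Longrightarrow> j<n \<Longrightarrow> q dvd M$$(i,j)"
begin

lemma indep_mod:
  fixes y :: "int vec"
  assumes y: "y \<in> carrier_vec n" and y0: "\<And>i. i < n - r \<Longrightarrow> y $ i = 0"
    and hyp: "\<And>j. j < r \<Longrightarrow> q dvd (\<Sum>i<n. N $$ (i,j) * y $ i)"
    and i: "i < n"
  shows "q dvd y $ i"
proof -
  have "\<forall>j<n. q dvd scalar_prod y (col M j) \<and> q dvd scalar_prod y (col N j)"
  proof (intro allI impI conjI)
    fix j assume j: "j < n"
    show "q dvd scalar_prod y (col M j)" unfolding sp_col[OF y M j]
    proof (rule dvd_sum)
      fix i assume "i \<in> {..<n}"
      thus "q dvd M $$ (i,j) * y $ i" using y0 Mdiv j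
        by (cases "i < n - r") auto
    qed
    show "q dvd scalar_prod y (col N j)" unfolding sp_col[OF y N j]
    proof (cases "j < r")
      case True thus "q dvd (\<Sum>i<n. N $$ (i,j) * y $ i)" by (rule hyp)
    next
      case False
      show "q dvd (\<Sum>i<n. N $$ (i,j) * y $ i)"
      proof (rule dvd_sum)
        fix i assume "i \<in> {..<n}"
        thus "q dvd N $$ (i,j) * y $ i" using y0 Ndiv j False
          by (cases "i < n - r") auto
      qed
    qed
  qed
  thus ?thesis using rk y i unfolding rank_full_mod_def by blast
qed

lemma solve_mod:
  "\<exists>y \<in> carrier_vec n. (\<forall>i<n-r. y $ i = 0) \<and>
     (\<forall>j<r. (\<Sum>i<n. N $$ (i,j) * y $ i) mod q = c j mod q)"
proof -
  define A where "A = {f::nat\<Rightarrow>int. \<forall>k. (k<r \<longrightarrow> 0 \<le> f k \<and> f k < q) \<and> (r \<le> k \<longrightarrow> f k = 0)}"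
  define yv where "yv f = Matrix.vec n (\<lambda>i. if n-r \<le> i then f (i-(n-r)) else 0)" for f :: "nat \<Rightarrow> int"
  define \<Phi> where "\<Phi> f = (\<lambda>j. if j<r then (\<Sum>k<r. N$$(n-r+k,j) * f k) mod q else 0)" for f :: "nat \<Rightarrow> int"
  have yv: "yv f \<in> carrier_vec n" for f unfolding yv_def by simp
  have yv0: "yv f $ i = 0" if "i < n - r" for f i using that unfolding yv_def by auto
  have sumre: "(\<Sum>i<n. N$$(i,j) * yv f $ i) = (\<Sum>k<r. N$$(n-r+k,j) * f k)" for f j
  proof -
    have "(\<Sum>i<n. N$$(i,j) * yv f $ i) = (\<Sum>i<n. if n - r \<le> i then N$$(n-r+(i-(n-r)),j) * f (i-(n-r)) else 0)"
      unfolding yv_def by (rule sum.cong) auto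
    also have "\<dots> = (\<Sum>k<r. N$$(n-r+k,j) * f k)" by (rule sum_shift_tail[OF r])
    finally show ?thesis .
  qed
  have finA: "finite A"
  proof (rule finite_subset)
    show "A \<subseteq> (\<lambda>g k. if k<r then g k else 0) ` (PiE {..<r} (\<lambda>_. {0..<q}))"
    proof
      fix f assume f: "f \<in> A"
      have "f = (\<lambda>k. if k<r then restrict f {..<r} k else 0)" using f unfolding A_def by auto
      moreover have "restrict f {..<r} \<in> PiE {..<r} (\<lambda>_. {0..<q})" using f unfolding A_def by auto
      ultimately show "f \<in> (\<lambda>g k. if k<r then g k else 0) ` (PiE {..<r} (\<lambda>_. {0..<q}))" by blast
    qed
    show "finite ((\<lambda>g k. if k<r then g k else 0) ` (PiE {..<r} (\<lambda>_. {0..<q})))"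
      by (intro finite_imageI finite_PiE) auto
  qed
  have PhiA: "\<Phi> ` A \<subseteq> A" unfolding A_def \<Phi>_def using q by (auto simp: pos_mod_bound pos_mod_sign)
  have injA: "inj_on \<Phi> A"
  proof (rule inj_onI)
    fix f1 f2 assume f1: "f1 \<in> A" and f2: "f2 \<in> A" and eq: "\<Phi> f1 = \<Phi> f2"
    define d where "d k = f1 k - f2 k" for k
    have "q dvd (\<Sum>i<n. N $$ (i,j) * yv d $ i)" if j: "j < r" for j
    proof -
      have "(\<Sum>k<r. N$$(n-r+k,j) * f1 k) mod q = (\<Sum>k<r. N$$(n-r+k,j) * f2 k) mod q"
        using fun_cong[OF eq, of j] j unfolding \<Phi>_def by simp
      hence "q dvd (\<Sum>k<r. N$$(n-r+k,j) * f1 k) - (\<Sum>k<r. N$$(n-r+k,j) * f2 k)"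
        by (simp add: mod_eq_dvd_iff)
      also have "(\<Sum>k<r. N$$(n-r+k,j) * f1 k) - (\<Sum>k<r. N$$(n-r+k,j) * f2 k) = (\<Sum>k<r. N$$(n-r+k,j) * d k)"
        by (simp add: d_def sum_subtractf[symmetric] algebra_simps)
      finally show ?thesis unfolding sumre .
    qed
    hence dv: "q dvd yv d $ i" if "i < n" for i using indep_mod[OF yv yv0] that by blast
    show "f1 = f2"
    proof
      fix k show "f1 k = f2 k"
      proof (cases "k < r")
        case True
        have "q dvd yv d $ (n-r+k)" using dv True r by auto
        have lt: "n - r + k < n" using True r by linarith
        have "yv d $ (n-r+k) = (if n - r \<le> n-r+k then d (n-r+k-(n-r)) else 0)"
          unfolding yv_def by (rule index_vec[OF lt])
        also have "\<dots> = d k" by (simp only: le_add1 if_True add_diff_cancel_left')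
        finally have "q dvd d k" using \<open>q dvd yv d $ (n-r+k)\<close> by simp
        moreover have "-q < d k" "d k < q" using f1 f2 True unfolding A_def d_def by force+
        ultimately have "d k = 0" using dvd_small_zero q by blast
        thus ?thesis unfolding d_def by simp
      next
        case False thus ?thesis using f1 f2 unfolding A_def by auto
      qed
    qed
  qed
  have surj: "\<Phi> ` A = A" by (rule endo_inj_surj[OF finA PhiA injA])
  define t where "t j = (if j < r then c j mod q else 0)" for j
  have "t \<in> A" unfolding A_def t_def using q by (auto simp: pos_mod_bound pos_mod_sign)
  then obtain f where f: "f \<in> A" "\<Phi> f = t" using surj by (metis imageE)
  show ?thesis
  proof (intro bexI[of _ "yv f"] conjI allI impI)
    fix j assume j: "j < r"
    have "(\<Sum>i<n. N $$ (i,j) * yv f $ i) mod q = \<Phi> f j" unfolding sumre \<Phi>_def using j by simp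
    thus "(\<Sum>i<n. N $$ (i,j) * yv f $ i) mod q = c j mod q" using j by (simp add: f(2) t_def)
  qed (auto simp: yv yv0)
qed

end



lemma gauss_term_resp:
  fixes M N :: "int mat" and Ninv :: "rat mat"
  assumes M: "M \<in> carrier_mat n n" and N: "N \<in> carrier_mat n n" and NI: "Ninv \<in> carrier_mat n n"
    and inv1: "ratm N * Ninv = 1\<^sub>m n" and inv2: "Ninv * ratm N = 1\<^sub>m n"
    and sym: "transpose_mat (M * transpose_mat N) = M * transpose_mat N"
    and uv: "(u, v) \<in> lat_rel N"
  shows "gauss_term M N u = gauss_term M N v"
proof -
  have mi: "mat_inv (ratm N) = Ninv" by (rule mat_inv_unique[OF ratm_carrier[OF N] NI inv1 inv2])
  have u: "u \<in> carrier_vec n" and v: "v \<in> carrier_vec n" using uv unfolding lat_rel_iff[OF N] by auto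
  obtain k where k: "scalar_prod (rv u) ((Ninv * ratm M) *\<^sub>v rv u)
      = scalar_prod (rv v) ((Ninv * ratm M) *\<^sub>v rv v) + of_int k"
    using qf_shift[OF M N NI inv1 inv2 sym uv] by blast
  have NI': "mat_inv (ratm N) \<in> carrier_mat n n" using mi NI by simp
  have "gauss_term M N u = exp (2 * pi * \<i> * complex_of_real (real_of_rat
     (scalar_prod (rv u) ((Ninv * ratm M) *\<^sub>v rv u))))"
    using gauss_term_qf[OF M N NI' u] mi by simp
  also have "\<dots> = exp (2 * pi * \<i> * complex_of_real (real_of_rat
     (scalar_prod (rv v) ((Ninv * ratm M) *\<^sub>v rv v) + of_int k)))" by (simp only: k)
  also have "\<dots> = exp (2 * pi * \<i> * complex_of_real (real_of_rat
     (scalar_prod (rv v) ((Ninv * ratm M) *\<^sub>v rv v))))" by (rule exp_shift_int)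
  also have "\<dots> = gauss_term M N v"
    using gauss_term_qf[OF M N NI' v] mi by simp
  finally show ?thesis .
qed

lemma diag_inv_vec:
  assumes fg: "\<And>i. i < n \<Longrightarrow> f i * g i = (1::'a::field)" and v: "v \<in> carrier_vec n"
  shows "mat_diag n g *\<^sub>v (mat_diag n f *\<^sub>v v) = v"
  using v fg by (intro eq_vecI) (auto simp: mat_diag_mult_vec mult.assoc[symmetric] mult.commute[of "g _"])

lemma diag_sp:
  assumes fg: "\<And>i. i < n \<Longrightarrow> f i * g i = (1::'a::field)" and a: "a \<in> carrier_vec n" and b: "b \<in> carrier_vec n"
  shows "scalar_prod (mat_diag n f *\<^sub>v a) (mat_diag n g *\<^sub>v b) = scalar_prod a b"
proof -
  have "scalar_prod (mat_diag n f *\<^sub>v a) (mat_diag n g *\<^sub>v b) = (\<Sum>i\<in>{0..<n}. (f i * g i) * (a $ i * b $ i))"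
    using a b by (auto simp: mat_diag_mult_vec scalar_prod_def mult_ac intro!: sum.cong)
  also have "\<dots> = scalar_prod a b" using a b fg by (auto simp: scalar_prod_def intro!: sum.cong)
  finally show ?thesis .
qed

lemma cancel_left:
  fixes A B Z :: "'a::semiring_1 mat"
  assumes "A \<in> carrier_mat n n" "B \<in> carrier_mat n n" "Z \<in> carrier_mat n m" "A * B = 1\<^sub>m n"
  shows "A * (B * Z) = Z"
proof -
  have "A * (B * Z) = (A * B) * Z" by (rule assoc_mult_mat[OF assms(1-3), symmetric])
  thus ?thesis using assms(3,4) by simp
qed

lemma diag_one:
  assumes "\<And>i. i < n \<Longrightarrow> f i * g i = (1::'a::field)"
  shows "mat_diag n f * mat_diag n g = 1\<^sub>m n"
  unfolding mat_diag_diag using assms by (intro eq_matI) (auto simp: mat_diag_def)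



lemma assoc3: "A \<in> carrier_mat n n \<Longrightarrow> B \<in> carrier_mat n n \<Longrightarrow> C \<in> carrier_mat n n \<Longrightarrow>
   A * B * C = A * (B * (C::'a::semiring_0 mat))"
  by (rule assoc_mult_mat)

lemma assoc4: "A \<in> carrier_mat n n \<Longrightarrow> B \<in> carrier_mat n n \<Longrightarrow> C \<in> carrier_mat n n \<Longrightarrow> D \<in> carrier_mat n n \<Longrightarrow>
   A * B * C * D = A * (B * (C * (D::'a::semiring_0 mat)))"
proof -
  assume c: "A \<in> carrier_mat n n" "B \<in> carrier_mat n n" "C \<in> carrier_mat n n" "D \<in> carrier_mat n n"
  have "A * B * C * D = (A * B) * (C * D)" by (rule assoc_mult_mat) (use c in auto)
  also have "\<dots> = A * (B * (C * D))" by (rule assoc_mult_mat) (use c in auto)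
  finally show ?thesis .
qed

theorem proposition5p2:
  fixes n r q :: nat and M N M' N' :: "int mat"
  assumes "prime q" and "r \<le> n"
    and "coprime_sym_pair n M N" and "det N \<noteq> 0"
    and "ratm M' = X_0r n q r * ratm M * mat_inv (X_r n q r)"
    and "ratm N' = X_0r n q r * ratm N * X_r n q r"
    and "coprime_sym_pair n M' N'"
  shows "gauss_sum M' N' = gauss_sum M N"
proof -
  note pq = assms(1) and r = assms(2) and cp = assms(3) and dN = assms(4)
    and eqM = assms(5) and eqN = assms(6) and cp' = assms(7)
  have q1: "q > 1" using pq by (rule prime_gt_1_nat)
  hence qr: "(of_nat q :: rat) \<noteq> 0" by simp
  have M: "M \<in> carrier_mat n n" and N: "N \<in> carrier_mat n n"
    and symN: "transpose_mat (M * transpose_mat N) = M * transpose_mat N"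
    and rkN: "\<forall>p::int. prime p \<longrightarrow> rank_full_mod n p M N"
    using cp unfolding coprime_sym_pair_def by auto
  have M': "M' \<in> carrier_mat n n" and N': "N' \<in> carrier_mat n n"
    and symN': "transpose_mat (M' * transpose_mat N') = M' * transpose_mat N'"
    using cp' unfolding coprime_sym_pair_def by auto
  have rk: "rank_full_mod n (int q) M N" using rkN pq by (simp add: prime_nat_int_transfer)
  define xx where "xx = (\<lambda>i. if i < r then (of_nat q :: rat) else 1)"
  define x0 where "x0 = (\<lambda>i. if i < n - r then (1::rat) else 1 / of_nat q)"
  define X where "X = mat_diag n xx"
  define X0 where "X0 = mat_diag n x0"
  define Xi where "Xi = mat_diag n (\<lambda>i. 1 / xx i)"
  define X0i where "X0i = mat_diag n (\<lambda>i. 1 / x0 i)"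
  have XX: "X_r n q r = X" unfolding X_r_def X_def xx_def ..
  have XX0: "X_0r n q r = X0" unfolding X_0r_def X0_def x0_def ..
  have xx0: "xx i \<noteq> 0" for i unfolding xx_def using qr by auto
  have x00: "x0 i \<noteq> 0" for i unfolding x0_def using qr by auto
  have cX: "X \<in> carrier_mat n n" "X0 \<in> carrier_mat n n" "Xi \<in> carrier_mat n n" "X0i \<in> carrier_mat n n"
    unfolding X_def X0_def Xi_def X0i_def by auto
  have XXi: "X * Xi = 1\<^sub>m n" "Xi * X = 1\<^sub>m n" unfolding X_def Xi_def using xx0 by (auto intro!: diag_one)
  have X0X0i: "X0 * X0i = 1\<^sub>m n" "X0i * X0 = 1\<^sub>m n" unfolding X0_def X0i_def using x00 by (auto intro!: diag_one)
  have miX: "mat_inv X = Xi" by (rule mat_inv_unique[OF cX(1) cX(3) XXi])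
  have eqM': "ratm M' = X0 * ratm M * Xi" using eqM unfolding XX XX0 miX .
  have eqN': "ratm N' = X0 * ratm N * X" using eqN unfolding XX XX0 .
  have entN: "rat_of_int (N' $$ (i,j)) = x0 i * rat_of_int (N $$ (i,j)) * xx j" if "i < n" "j < n" for i j
  proof -
    have "ratm N' $$ (i,j) = (X0 * ratm N * X) $$ (i,j)" by (simp add: eqN')
    also have "\<dots> = x0 i * rat_of_int (N $$ (i,j)) * xx j"
      unfolding X0_def X_def using that N
      by (simp add: mat_diag_mult_left[of _ n n] mat_diag_mult_right[of _ n n])
    finally show ?thesis using that N' by simp
  qed
  have entM: "rat_of_int (M' $$ (i,j)) = x0 i * rat_of_int (M $$ (i,j)) * (1 / xx j)" if "i < n" "j < n" for i j
  proof -
    have "ratm M' $$ (i,j) = (X0 * ratm M * Xi) $$ (i,j)" by (simp add: eqM')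
    also have "\<dots> = x0 i * rat_of_int (M $$ (i,j)) * (1 / xx j)"
      unfolding X0_def Xi_def using that M
      by (simp add: mat_diag_mult_left[of _ n n] mat_diag_mult_right[of _ n n])
    finally show ?thesis using that M' by simp
  qed
  define cq where "cq j = (if j < r then int q else 1)" for j
  define e' where "e' i = (if i < n - r then 1 else int q)" for i
  define e where "e i = (if i < n - r then int q else 1)" for i
  have cq0: "cq j \<noteq> 0" for j unfolding cq_def using q1 by auto
  have xxcq: "xx j = rat_of_int (cq j)" for j unfolding xx_def cq_def by auto
  have ee': "e i * e' i = int q" for i unfolding e_def e'_def by auto
  have K1: "N' $$ (i,j) * e' i = N $$ (i,j) * cq j" if "i < n" "j < n" for i j
  proof -
    have x0e: "x0 i * rat_of_int (e' i) = 1" unfolding x0_def e'_def using qr by auto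
    have "rat_of_int (N' $$ (i,j) * e' i) = (x0 i * rat_of_int (e' i)) * rat_of_int (N $$ (i,j)) * xx j"
      using entN[OF that] by (simp add: mult_ac)
    also have "\<dots> = rat_of_int (N $$ (i,j) * cq j)" unfolding x0e xxcq by simp
    finally have "rat_of_int (N' $$ (i,j) * e' i) = rat_of_int (N $$ (i,j) * cq j)" .
    thus ?thesis by (simp only: of_int_eq_iff)
  qed
  have K3: "M $$ (i,j) = M' $$ (i,j) * cq j * e' i" if "i < n" "j < n" for i j
  proof -
    have "rat_of_int (M $$ (i,j)) = rat_of_int (M' $$ (i,j) * cq j * e' i)"
      using entM[OF that] qr unfolding e'_def x0_def cq_def xx_def by (auto simp: field_simps split: if_splits)
    thus ?thesis by (simp only: of_int_eq_iff)
  qed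
  have Ndiv: "int q dvd N$$(i,j)" if "n-r \<le> i" "i<n" "r \<le> j" "j<n" for i j
  proof -
    have "N' $$ (i,j) * int q = N $$ (i,j)" using K1[of i j] that unfolding e'_def cq_def by auto
    thus ?thesis by (metis dvd_triv_right)
  qed
  have Mdiv: "int q dvd M$$(i,j)" if "n-r \<le> i" "i<n" "j<n" for i j
  proof -
    have "M $$ (i,j) = M' $$ (i,j) * cq j * int q" using K3[of i j] that unfolding e'_def by auto
    thus ?thesis by (metis dvd_triv_right)
  qed
  interpret modsetup n r "int q" M N
    using N M rk r q1 Ndiv Mdiv by unfold_locales auto

  obtain Ninv where NI: "Ninv \<in> carrier_mat n n" and inv1: "ratm N * Ninv = 1\<^sub>m n"
    and inv2: "Ninv * ratm N = 1\<^sub>m n" using ratm_inv_exists[OF N dN] by blast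
  define B' where "B' = Xi * Ninv * X0i"
  have cB': "B' \<in> carrier_mat n n" unfolding B'_def using cX NI by auto
  have cNr: "ratm N \<in> carrier_mat n n" "ratm M \<in> carrier_mat n n" using N M by auto
  have inv1': "ratm N' * B' = 1\<^sub>m n"
  proof -
    have "ratm N' * B' = X0 * (ratm N * (X * (Xi * (Ninv * X0i))))"
      unfolding eqN' B'_def assoc3[OF cX(3) NI cX(4)]
      by (rule assoc4) (use cX NI cNr in auto)
    also have "X * (Xi * (Ninv * X0i)) = Ninv * X0i" by (rule cancel_left) (use cX NI XXi in auto)
    also have "ratm N * (Ninv * X0i) = X0i" by (rule cancel_left) (use cX NI cNr inv1 in auto)
    finally show ?thesis using X0X0i by simp
  qed
  have inv2': "B' * ratm N' = 1\<^sub>m n"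
  proof -
    have "B' * ratm N' = Xi * (Ninv * (X0i * (X0 * ratm N * X)))"
      unfolding eqN' B'_def by (rule assoc4) (use cX NI cNr in auto)
    also have "X0 * ratm N * X = X0 * (ratm N * X)" by (rule assoc3) (use cX NI cNr in auto)
    also have "X0i * (X0 * (ratm N * X)) = ratm N * X" by (rule cancel_left) (use cX NI cNr X0X0i in auto)
    also have "Ninv * (ratm N * X) = X" by (rule cancel_left) (use cX NI cNr inv2 in auto)
    finally show ?thesis using XXi by simp
  qed
  have miN: "mat_inv (ratm N) = Ninv" by (rule mat_inv_unique[OF cNr(1) NI inv1 inv2])
  have miN': "mat_inv (ratm N') = B'" by (rule mat_inv_unique[OF ratm_carrier[OF N'] cB' inv1' inv2'])
  define g where "g u = Matrix.vec n (\<lambda>j. cq j * u $ j)" for u :: "int vec"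
  have gC: "g u \<in> carrier_vec n" for u unfolding g_def by simp
  have gix: "g u $ j = cq j * u $ j" if "j < n" for u j unfolding g_def using that by simp
  have gi: "(u,v) \<in> lat_rel N \<longleftrightarrow> (g u, g v) \<in> lat_rel N'"
    if u: "u \<in> carrier_vec n" and v: "v \<in> carrier_vec n" for u v
  proof
    assume "(u,v) \<in> lat_rel N"
    then obtain w where w: "w \<in> carrier_vec n" and e: "\<forall>j<n. u $ j - v $ j = (\<Sum>i<n. N $$ (i,j) * w $ i)"
      unfolding lat_rel_iff[OF N] by blast
    show "(g u, g v) \<in> lat_rel N'" unfolding lat_rel_iff[OF N']
    proof (intro conjI gC bexI[of _ "Matrix.vec n (\<lambda>i. e' i * w $ i)"] allI impI)
      fix j assume j: "j < n"
      have "g u $ j - g v $ j = cq j * (u $ j - v $ j)" using j by (simp add: gix right_diff_distrib)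
      also have "\<dots> = cq j * (\<Sum>i<n. N $$ (i,j) * w $ i)" using e j by simp
      also have "\<dots> = (\<Sum>i<n. N' $$ (i,j) * Matrix.vec n (\<lambda>i. e' i * w $ i) $ i)"
        unfolding sum_distrib_left
      proof (rule sum.cong[OF refl])
        fix i assume "i \<in> {..<n}"
        hence i: "i < n" by simp
        have "N' $$ (i,j) * Matrix.vec n (\<lambda>i. e' i * w $ i) $ i = (N' $$ (i,j) * e' i) * w $ i"
          using i by (simp add: mult.assoc)
        also have "\<dots> = cq j * (N $$ (i,j) * w $ i)" unfolding K1[OF i j] by (simp add: mult_ac)
        finally show "cq j * (N $$ (i,j) * w $ i) = N' $$ (i,j) * Matrix.vec n (\<lambda>i. e' i * w $ i) $ i" by simp
      qed
      finally show "g u $ j - g v $ j = (\<Sum>i<n. N' $$ (i,j) * Matrix.vec n (\<lambda>i. e' i * w $ i) $ i)" .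
    qed simp
  next
    assume "(g u, g v) \<in> lat_rel N'"
    then obtain y where y: "y \<in> carrier_vec n" and e: "\<forall>j<n. g u $ j - g v $ j = (\<Sum>i<n. N' $$ (i,j) * y $ i)"
      unfolding lat_rel_iff[OF N'] by blast
    define x where "x = Matrix.vec n (\<lambda>i. e i * y $ i)"
    have x: "x \<in> carrier_vec n" unfolding x_def by simp
    have keyx: "int q * (u $ j - v $ j) = (\<Sum>i<n. N $$ (i,j) * x $ i)" if j: "j < n" for j
    proof -
      have "cq j * (int q * (u $ j - v $ j)) = int q * (g u $ j - g v $ j)"
        using j by (simp add: gix algebra_simps)
      also have "\<dots> = (\<Sum>i<n. int q * N' $$ (i,j) * y $ i)"
        using e j by (simp add: sum_distrib_left mult.assoc)
      also have "\<dots> = (\<Sum>i<n. cq j * (N $$ (i,j) * x $ i))"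
      proof (rule sum.cong[OF refl])
        fix i assume "i \<in> {..<n}"
        hence i: "i < n" by simp
        have "int q * N' $$ (i,j) * y $ i = e i * (N' $$ (i,j) * e' i) * y $ i"
          using ee'[of i] by (simp add: mult_ac)
        also have "\<dots> = cq j * (N $$ (i,j) * x $ i)" unfolding K1[OF i j] x_def using i by (simp add: mult_ac)
        finally show "int q * N' $$ (i,j) * y $ i = cq j * (N $$ (i,j) * x $ i)" .
      qed
      also have "\<dots> = cq j * (\<Sum>i<n. N $$ (i,j) * x $ i)" by (simp add: sum_distrib_left)
      finally show ?thesis using cq0[of j] by simp
    qed
    have xdvd: "int q dvd x $ i" if "i < n" for i
    proof -
      have "\<forall>j<n. int q dvd scalar_prod x (col M j) \<and> int q dvd scalar_prod x (col N j)"
      proof (intro allI impI conjI)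
        fix j assume j: "j < n"
        show "int q dvd scalar_prod x (col N j)" unfolding sp_col[OF x N j] keyx[OF j, symmetric] by simp
        show "int q dvd scalar_prod x (col M j)" unfolding sp_col[OF x M j]
        proof (rule dvd_sum)
          fix i assume "i \<in> {..<n}"
          thus "int q dvd M $$ (i,j) * x $ i" using Mdiv[of i j] j unfolding x_def e_def
            by (cases "i < n - r") auto
        qed
      qed
      thus ?thesis using rk x that unfolding rank_full_mod_def by blast
    qed
    define w where "w = Matrix.vec n (\<lambda>i. if i < n - r then y $ i else y $ i div int q)"
    have qw: "int q * w $ i = x $ i" if i: "i < n" for i
    proof (cases "i < n - r")
      case True thus ?thesis using i unfolding w_def x_def e_def by simp
    next
      case False
      hence "x $ i = y $ i" using i unfolding x_def e_def by simp
      thus ?thesis using xdvd[OF i] False i unfolding w_def by simp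
    qed
    show "(u,v) \<in> lat_rel N" unfolding lat_rel_iff[OF N]
    proof (intro conjI u v bexI[of _ w] allI impI)
      fix j assume j: "j < n"
      have "int q * (u $ j - v $ j) = (\<Sum>i<n. N $$ (i,j) * x $ i)" by (rule keyx[OF j])
      also have "\<dots> = int q * (\<Sum>i<n. N $$ (i,j) * w $ i)"
        by (simp add: sum_distrib_left qw[symmetric] mult_ac)
      finally show "u $ j - v $ j = (\<Sum>i<n. N $$ (i,j) * w $ i)" using q1 by simp
    qed (simp add: w_def)
  qed
  have gs: "\<exists>a\<in>carrier_vec n. (g a, b) \<in> lat_rel N'" if b: "b \<in> carrier_vec n" for b
  proof -
    obtain y where y: "y \<in> carrier_vec n" and y0: "\<forall>i<n-r. y $ i = 0"
      and ym: "\<forall>j<r. (\<Sum>i<n. N $$ (i,j) * y $ i) mod int q = (- b $ j) mod int q"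
      using solve_mod[of "\<lambda>j. - b $ j"] by blast
    define s where "s j = (\<Sum>i<n. N' $$ (i,j) * y $ i)" for j
    have sdvd: "int q dvd b $ j + s j" if j: "j < r" for j
    proof -
      have jn: "j < n" using j r by simp
      have "s j = (\<Sum>i<n. N $$ (i,j) * y $ i)" unfolding s_def
      proof (rule sum.cong[OF refl])
        fix i assume "i \<in> {..<n}"
        hence i: "i < n" by simp
        show "N' $$ (i,j) * y $ i = N $$ (i,j) * y $ i"
        proof (cases "i < n - r")
          case True thus ?thesis using y0 by simp
        next
          case False
          have "N' $$ (i,j) * int q = N $$ (i,j) * int q" using K1[OF i jn] False j unfolding e'_def cq_def by simp
          hence "N' $$ (i,j) = N $$ (i,j)" using q1 by simp
          thus ?thesis by simp
        qed
      qed
      hence "s j mod int q = (- b $ j) mod int q" using ym j by simp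
      hence "int q dvd s j - (- b $ j)" by (simp add: mod_eq_dvd_iff)
      thus ?thesis by (simp add: add.commute)
    qed
    define a where "a = Matrix.vec n (\<lambda>j. if j < r then (b $ j + s j) div int q else b $ j + s j)"
    show ?thesis
    proof (intro bexI[of _ a])
      show "a \<in> carrier_vec n" unfolding a_def by simp
      show "(g a, b) \<in> lat_rel N'" unfolding lat_rel_iff[OF N']
      proof (intro conjI gC b bexI[of _ y] allI impI y)
        fix j assume j: "j < n"
        have "g a $ j = b $ j + s j"
        proof (cases "j < r")
          case True thus ?thesis using j sdvd[OF True] unfolding gix[OF j] a_def cq_def by simp
        next
          case False thus ?thesis using j unfolding gix[OF j] a_def cq_def by simp
        qed
        thus "g a $ j - b $ j = (\<Sum>i<n. N' $$ (i,j) * y $ i)" unfolding s_def by simp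
      qed
    qed
  qed
  have fR: "gauss_term M N a = gauss_term M N a'" if "(a,a') \<in> lat_rel N" for a a'
    by (rule gauss_term_resp[OF M N NI inv1 inv2 symN that])
  have hS: "gauss_term M' N' b = gauss_term M' N' b'" if "(b,b') \<in> lat_rel N'" for b b'
    by (rule gauss_term_resp[OF M' N' cB' inv1' inv2' symN' that])
  have hg: "gauss_term M' N' (g a) = gauss_term M N a" if a: "a \<in> carrier_vec n" for a
  proof -
    define \<alpha> where "\<alpha> = rv a"
    have al: "\<alpha> \<in> carrier_vec n" unfolding \<alpha>_def using a by simp
    have rg: "rv (g a) = X *\<^sub>v \<alpha>"
      unfolding X_def mat_diag_mult_vec[OF al] using a
      by (intro eq_vecI) (auto simp: \<alpha>_def gix xxcq g_def)
    have cM: "B' * ratm M' = Xi * (Ninv * (ratm M * Xi))"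
    proof -
      have "B' * ratm M' = Xi * (Ninv * (X0i * (X0 * ratm M * Xi)))"
        unfolding eqM' B'_def by (rule assoc4) (use cX NI cNr in auto)
      also have "X0 * ratm M * Xi = X0 * (ratm M * Xi)" by (rule assoc3) (use cX NI cNr in auto)
      also have "X0i * (X0 * (ratm M * Xi)) = ratm M * Xi" by (rule cancel_left) (use cX NI cNr X0X0i in auto)
      finally show ?thesis .
    qed
    have "(B' * ratm M') *\<^sub>v (X *\<^sub>v \<alpha>) = Xi *\<^sub>v (Ninv *\<^sub>v (ratm M *\<^sub>v (Xi *\<^sub>v (X *\<^sub>v \<alpha>))))"
    proof -
      have v: "X *\<^sub>v \<alpha> \<in> carrier_vec n" using cX al by simp
      have "Xi * (Ninv * (ratm M * Xi)) *\<^sub>v (X *\<^sub>v \<alpha>) = Xi *\<^sub>v ((Ninv * (ratm M * Xi)) *\<^sub>v (X *\<^sub>v \<alpha>))"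
        by (rule assoc_mult_mat_vec) (use cX NI cNr v in auto)
      also have "(Ninv * (ratm M * Xi)) *\<^sub>v (X *\<^sub>v \<alpha>) = Ninv *\<^sub>v ((ratm M * Xi) *\<^sub>v (X *\<^sub>v \<alpha>))"
        by (rule assoc_mult_mat_vec) (use cX NI cNr v in auto)
      also have "(ratm M * Xi) *\<^sub>v (X *\<^sub>v \<alpha>) = ratm M *\<^sub>v (Xi *\<^sub>v (X *\<^sub>v \<alpha>))"
        by (rule assoc_mult_mat_vec) (use cX NI cNr v in auto)
      finally show ?thesis unfolding cM .
    qed
    also have "Xi *\<^sub>v (X *\<^sub>v \<alpha>) = \<alpha>" unfolding X_def Xi_def by (rule diag_inv_vec[OF _ al]) (use xx0 in auto)
    finally have e1: "(B' * ratm M') *\<^sub>v (X *\<^sub>v \<alpha>) = Xi *\<^sub>v (Ninv *\<^sub>v (ratm M *\<^sub>v \<alpha>))" .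
    have "scalar_prod (X *\<^sub>v \<alpha>) ((B' * ratm M') *\<^sub>v (X *\<^sub>v \<alpha>)) = scalar_prod \<alpha> (Ninv *\<^sub>v (ratm M *\<^sub>v \<alpha>))"
      unfolding e1 unfolding X_def Xi_def by (rule diag_sp) (use xx0 al NI cNr in auto)
    also have "\<dots> = scalar_prod \<alpha> ((Ninv * ratm M) *\<^sub>v \<alpha>)" using NI cNr al by simp
    finally have qe: "scalar_prod (rv (g a)) ((mat_inv (ratm N') * ratm M') *\<^sub>v rv (g a))
        = scalar_prod (rv a) ((mat_inv (ratm N) * ratm M) *\<^sub>v rv a)"
      unfolding rg miN' miN \<alpha>_def .
    have c1: "mat_inv (ratm N') \<in> carrier_mat n n" using miN' cB' by simp
    have c2: "mat_inv (ratm N) \<in> carrier_mat n n" using miN NI by simp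
    show ?thesis
      unfolding gauss_term_qf[OF M' N' c1 gC] gauss_term_qf[OF M N c2 a] qe ..
  qed
  have dN': "dim_row N' = n" and dN'': "dim_row N = n" using N N' by auto
  show ?thesis
    unfolding gauss_sum_def dN' dN''
    by (rule sum_quotient_bij[where g = g and f = "gauss_term M N" and h = "gauss_term M' N'",
        OF lat_rel_equiv[OF N] lat_rel_equiv[OF N'] gC gi gs fR hS hg])
qed

end
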